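(* Let $a>b>0$ be real numbers with $a/b$ irrational, and let $A,B,C$ be positive integers such that one of the following holds: (i) $A a^2+C b^2=B\,a\,b$ (equation in defect); (ii) $A a^2+B\,a\,b=C b^2$; (iii) $A a^2=C b^2$. Let $e_{-1}=a,\ e_0=b,\ e_1,e_2,\dots$ be the anthyphairetic remainders of $a$ to $b$. Then there exist an index $n\ge 0$ and positive integers $A',B',C'$ such that $A' e_n^2=B'\,e_n\,e_{n+1}+C' e_{n+1}^2$, i.e. after finitely many anthyphairetic substitutions the equation becomes a quadratic equation in excess.
   Context: For positive reals $a,b$, the anthyphairesis of $a$ to $b$ is the Euclidean subtraction algorithm: set $e_{-1}=a$, $e_0=b$, and for $i\ge 0$, as long as $e_i>0$, write $e_{i-1}=k_i e_i+e_{i+1}$ with $k_i$ a nonnegative integer and $0\le e_{i+1}<e_i$; the process stops if some remainder is $0$ (which never happens when $a/b$ is irrational). The $e_i$ are the anthyphairetic remainders. An anthyphairetic substitution replaces $e_{i-1}$ by $k_ie_i+e_{i+1}$ in a quadratic relation between $e_{i-1}$ and $e_i$, producing a quadratic relation between $e_i$ and $e_{i+1}$. *)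

theory Defs
  imports Complex_Main
begin

text \<open>Anthyphairetic remainders of a to b, shifted by one:
  anth_rem a b 0 = e_{-1} = a, anth_rem a b 1 = e_0 = b, and in general
  anth_rem a b (i+1) = e_i.\<close>
fun anth_rem :: "real \<Rightarrow> real \<Rightarrow> nat \<Rightarrow> real" where
  "anth_rem a b 0 = a"
| "anth_rem a b (Suc 0) = b"
| "anth_rem a b (Suc (Suc n)) =
     anth_rem a b n - of_int \<lfloor>anth_rem a b n / anth_rem a b (Suc n)\<rfloor> * anth_rem a b (Suc n)"

end

theory Submission imports Defs begin

definition exc :: "real \<Rightarrow> real \<Rightarrow> nat \<Rightarrow> bool" where
  "exc a b m \<longleftrightarrow> (\<exists>A' B' C' :: nat. A' > 0 \<and> B' > 0 \<and> C' > 0 \<and>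
           real A' * (anth_rem a b m)\<^sup>2
             = real B' * anth_rem a b m * anth_rem a b (Suc m)
               + real C' * (anth_rem a b (Suc m))\<^sup>2)"

definition QE :: "real \<Rightarrow> real \<Rightarrow> nat \<Rightarrow> int \<Rightarrow> int \<Rightarrow> int \<Rightarrow> bool" where
  "QE a b m p q r \<longleftrightarrow> of_int p * (anth_rem a b m)\<^sup>2 + of_int q * anth_rem a b m * anth_rem a b (Suc m)
     + of_int r * (anth_rem a b (Suc m))\<^sup>2 = 0"

context
  fixes a b :: real
  assumes ab: "b > 0" "a > b" "a / b \<notin> \<rat>"
begin

abbreviation "E \<equiv> anth_rem a b"

lemma basic: "0 < E (Suc m) \<and> E (Suc m) < E m \<and> E m / E (Suc m) \<notin> \<rat>"
proof (induction m)
  case 0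
  then show ?case using ab by simp
next
  case (Suc m)
  define x where "x = E m / E (Suc m)"
  define k where "k = \<lfloor>x\<rfloor>"
  have f: "0 < E (Suc m)" "E (Suc m) < E m" and xq: "x \<notin> \<rat>" using Suc by (auto simp: x_def)
  have rec: "E (Suc (Suc m)) = E m - of_int k * E (Suc m)" by (simp add: x_def k_def)
  have xi: "x \<notin> \<int>" using xq Ints_subset_Rats by blast
  have k1: "of_int k < x" using xi of_int_floor_le[of x] unfolding k_def
    by (metis Ints_of_int order_le_less)
  have k2: "x < of_int k + 1" unfolding k_def by linarith
  have em: "E m = x * E (Suc m)" using f by (simp add: x_def)
  have g: "E (Suc (Suc m)) = E (Suc m) * (x - of_int k)" using rec em by (simp add: algebra_simps)
  have gp: "0 < E (Suc (Suc m))" using g f k1 by simp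
  have gl: "E (Suc (Suc m)) < E (Suc m)" using g f k2
    by (simp add: mult_less_cancel_left1)
  have "E (Suc m) / E (Suc (Suc m)) \<notin> \<rat>"
  proof
    assume "E (Suc m) / E (Suc (Suc m)) \<in> \<rat>"
    moreover have "E (Suc m) / E (Suc (Suc m)) = inverse (x - of_int k)"
      using f k1 by (simp only: g) (simp add: field_simps)
    ultimately have "inverse (x - of_int k) \<in> \<rat>" by simp
    hence "x - of_int k \<in> \<rat>" using Rats_inverse by fastforce
    hence "x - of_int k + of_int k \<in> \<rat>" by (intro Rats_add) auto
    thus False using xq by simp
  qed
  thus ?case using gp gl by simp
qed

lemma step:
  fixes m :: nat
  defines "e \<equiv> E m" and "f \<equiv> E (Suc m)" and "g \<equiv> E (Suc (Suc m))"
    and "k \<equiv> \<lfloor>E m / E (Suc m)\<rfloor>"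
  shows "e = of_int k * f + g" "0 < g" "g < f" "f < e" "k \<ge> 1" "of_int k * f < e"
    "f / g \<notin> \<rat>"
proof -
  have b1: "0 < f" "f < e" using basic[of m] by (auto simp: e_def f_def)
  have b2: "0 < g" "g < f" "f / g \<notin> \<rat>" using basic[of "Suc m"] by (auto simp: g_def f_def)
  show "e = of_int k * f + g" by (simp add: e_def f_def g_def k_def)
  thus "of_int k * f < e" using b2 by linarith
  show "0 < g" "g < f" "f < e" "f / g \<notin> \<rat>" using b1 b2 by auto
  have "e / f > 1" using b1 by simp
  thus "k \<ge> 1" unfolding k_def e_def f_def by linarith
qed


lemma exc_int:
  assumes "p < 0" "q > 0" "r > 0" "QE a b m p q r"
  shows "exc a b m"
  unfolding exc_def
proof (intro exI conjI)
  show "nat (-p) > 0" "nat q > 0" "nat r > 0" using assms by auto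
  show "real (nat (- p)) * (E m)\<^sup>2 = real (nat q) * E m * E (Suc m) + real (nat r) * (E (Suc m))\<^sup>2"
    using assms by (simp add: QE_def of_nat_nat algebra_simps)
qed

lemma exc_int':
  assumes "p > 0" "q < 0" "r < 0" "QE a b m p q r"
  shows "exc a b m"
proof -
  have "QE a b m (-p) (-q) (-r)" using assms(4) unfolding QE_def by (simp add: algebra_simps)
  thus ?thesis using assms by (intro exc_int[of "-p" "-q" "-r"]) auto
qed

lemma trans:
  assumes "QE a b m p q r"
  defines "k \<equiv> \<lfloor>E m / E (Suc m)\<rfloor>"
  shows "QE a b (Suc m) (p*k^2+q*k+r) (2*p*k+q) p"
proof -
  have e: "E m = of_int k * E (Suc m) + E (Suc (Suc m))" using step(1)[of m] by (simp add: k_def)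
  show ?thesis using assms(1) unfolding QE_def e by (simp add: algebra_simps power2_eq_square)
qed

lemma typeIII:
  assumes "p < 0" "r > 0" "QE a b m p 0 r"
  shows "exc a b (Suc m)"
proof -
  define k where "k = \<lfloor>E m / E (Suc m)\<rfloor>"
  note st = step[of m, folded k_def]
  define e f where "e = E m" and "f = E (Suc m)"
  have eq: "of_int p * e^2 + of_int r * f^2 = 0" using assms(3) by (simp add: QE_def e_def f_def)
  have kf: "0 \<le> of_int k * f" "of_int k * f < e" using st by (auto simp: e_def f_def)
  have "(of_int k * f)^2 < e^2" using kf by (simp add: power_strict_mono)
  hence "of_int p * e^2 < of_int p * (of_int k * f)^2" using assms(1) by simp
  hence "real_of_int (p*k^2 + r) * f^2 > 0" using eq by (simp add: algebra_simps power_mult_distrib)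
  hence "real_of_int (p*k^2 + r) > 0" using st by (simp add: zero_less_mult_iff f_def)
  hence "p*k^2+r > 0" by linarith
  moreover have "2*p*k + 0 < 0" using assms st by (simp add: mult_neg_pos)
  ultimately show ?thesis using trans[OF assms(3), folded k_def] assms
    by (intro exc_int'[of "p*k^2+0*k+r" "2*p*k+0" p]) auto
qed

lemma typeII:
  assumes "p < 0" "q < 0" "r > 0" "QE a b m p q r"
  shows "exc a b (Suc m)"
proof -
  define k where "k = \<lfloor>E m / E (Suc m)\<rfloor>"
  note st = step[of m, folded k_def]
  define e f where "e = E m" and "f = E (Suc m)"
  have eq: "of_int p * e^2 + of_int q * e * f + of_int r * f^2 = 0" using assms(4) by (simp add: QE_def e_def f_def)
  have kf: "0 \<le> of_int k * f" "of_int k * f < e" "0 < f" using st by (auto simp: e_def f_def)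
  have "(of_int k * f)^2 < e^2" using kf by (simp add: power_strict_mono)
  hence 1: "of_int p * e^2 < of_int p * (of_int k * f)^2" using assms(1) by simp
  have 2: "of_int q * e * f < of_int q * (of_int k * f) * f" using kf assms(2) by simp
  have "real_of_int (p*k^2 + q*k + r) * f^2 > 0" using eq 1 2 by (simp add: algebra_simps power_mult_distrib power2_eq_square)
  hence "real_of_int (p*k^2 + q*k + r) > 0" using st by (simp add: zero_less_mult_iff f_def)
  hence "p*k^2+q*k+r > 0" by linarith
  moreover have "2*p*k + q < 0" using assms st by (smt (verit) mult_neg_pos)
  ultimately show ?thesis using trans[OF assms(4), folded k_def] assms
    by (intro exc_int'[of "p*k^2+q*k+r" "2*p*k+q" p]) auto
qed

lemma defect_aux:
  "\<forall>m p q r. nat (p + r) = N \<longrightarrow> p > 0 \<longrightarrow> q < 0 \<longrightarrow> r > 0 \<longrightarrow> QE a b m p q r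
     \<longrightarrow> (\<exists>n>m. exc a b n)"
proof (induction N rule: less_induct)
  case (less N)
  show ?case
  proof (intro allI impI)
    fix m p q r
    assume N: "nat (p + r) = N" and pqr: "p > 0" "q < 0" "r > 0" and Q: "QE a b m p q r"
    define k where "k = \<lfloor>E m / E (Suc m)\<rfloor>"
    note st = step[of m, folded k_def]
    define e f g where "e = E m" and "f = E (Suc m)" and "g = E (Suc (Suc m))"
    have eq: "of_int p * e^2 + of_int q * e * f + of_int r * f^2 = 0" using Q by (simp add: QE_def e_def f_def)
    have kf: "0 \<le> of_int k * f" "of_int k * f < e" "0 < f" "0 < g" "f < e" "k \<ge> 1" "f / g \<notin> \<rat>"
      using st by (auto simp: e_def f_def g_def)
    define p' q' where "p' = p*k^2+q*k+r" and "q' = 2*p*k+q"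
    have Q': "QE a b (Suc m) p' q' p" using trans[OF Q, folded k_def] by (simp add: p'_def q'_def)
    have eq': "of_int p' * f^2 + of_int q' * f * g + of_int p * g^2 = 0" using Q' by (simp add: QE_def g_def f_def)
    consider "p' < 0" | "p' = 0" | "p' > 0" by linarith
    then show "\<exists>n>m. exc a b n"
    proof cases
      case 1
      consider "q' > 0" | "q' = 0" | "q' < 0" by linarith
      then show ?thesis
      proof cases
        case 1
        hence "exc a b (Suc m)" using exc_int[OF \<open>p' < 0\<close> 1 pqr(1) Q'] by simp
        thus ?thesis by blast
      next
        case 2
        hence "exc a b (Suc (Suc m))" using typeIII[OF \<open>p' < 0\<close> pqr(1)] Q' by simp
        thus ?thesis by (intro exI[of _ "Suc (Suc m)"]) simp
      next
        case 3
        hence "exc a b (Suc (Suc m))" using typeII[OF \<open>p' < 0\<close> 3 pqr(1) Q'] by simp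
        thus ?thesis by (intro exI[of _ "Suc (Suc m)"]) simp
      qed
    next
      case 2
      hence "of_int q' * f * g + of_int p * g^2 = 0" using eq' by simp
      hence "(of_int q' * f + of_int p * g) * g = 0" by (simp add: algebra_simps power2_eq_square)
      hence h: "of_int q' * f + of_int p * g = 0" using kf by simp
      show ?thesis
      proof (cases "q' = 0")
        case True
        thus ?thesis using h kf pqr by simp
      next
        case False
        hence "f / g = of_int (-p) / of_int q'" using h kf by (simp add: field_simps)
        hence "f / g \<in> \<rat>" by simp
        thus ?thesis using kf by simp
      qed
    next
      case 3
      have "q' < 0"
      proof (rule ccontr)
        assume "\<not> q' < 0"
        hence "0 \<le> of_int q' * f * g" using kf by simp
        moreover have "0 < of_int p' * f^2" using 3 kf by simp
        moreover have "0 < of_int p * g^2" using pqr kf by simp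
        ultimately show False using eq' by linarith
      qed
      have "e * (of_int p * e + of_int q * f) = - (of_int r * f^2)" using eq by (simp add: algebra_simps power2_eq_square)
      moreover have "0 < of_int r * f^2" using pqr kf by simp
      ultimately have "e * (of_int p * e + of_int q * f) < 0" by linarith
      hence "of_int p * e + of_int q * f < 0" using kf by (simp add: mult_less_0_iff)
      moreover have "of_int p * (of_int k * f) < of_int p * e" using kf pqr by simp
      ultimately have "(of_int (p*k+q)) * f < 0" by (simp add: algebra_simps)
      hence "real_of_int (p*k+q) < 0" using kf by (simp add: mult_less_0_iff)
      hence "p*k+q < 0" by linarith
      hence "k*(p*k+q) < 0" using kf by (simp add: mult_pos_neg)
      hence "p' < r" by (simp add: p'_def algebra_simps power2_eq_square)
      hence lt: "nat (p' + p) < N" using N 3 pqr by simp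
      have "\<exists>n>Suc m. exc a b n" using less.IH[OF lt] 3 \<open>q' < 0\<close> pqr Q' by blast
      thus ?thesis by (meson Suc_lessD less_trans_Suc)
    qed
  qed
qed

end

theorem proposition6p2p3:
  fixes a b :: real and A B C :: nat
  assumes "a > b" and "b > 0"
    and "a / b \<notin> \<rat>"
    and "A > 0" and "B > 0" and "C > 0"
    and "A * a\<^sup>2 + C * b\<^sup>2 = B * a * b
         \<or> A * a\<^sup>2 + B * a * b = C * b\<^sup>2
         \<or> A * a\<^sup>2 = C * b\<^sup>2"
  shows "\<exists>n::nat. \<exists>A' B' C' :: nat. A' > 0 \<and> B' > 0 \<and> C' > 0 \<and>
           real A' * (anth_rem a b (n+1))\<^sup>2
             = real B' * anth_rem a b (n+1) * anth_rem a b (n+2)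
               + real C' * (anth_rem a b (n+2))\<^sup>2"
proof -
  have ab: "b > 0" "a > b" "a / b \<notin> \<rat>" using assms by auto
  have "\<exists>n>0. exc a b n"
    using assms(7)
  proof (elim disjE)
    assume h: "A * a\<^sup>2 + C * b\<^sup>2 = B * a * b"
    have "QE a b 0 (int A) (- int B) (int C)" using h by (simp add: QE_def algebra_simps)
    show ?thesis
      by (rule defect_aux[OF ab, rule_format, OF refl]) (use assms \<open>QE a b 0 (int A) (- int B) (int C)\<close> in auto)
  next
    assume h: "A * a\<^sup>2 + B * a * b = C * b\<^sup>2"
    have "QE a b 0 (- int A) (- int B) (int C)" using h by (simp add: QE_def algebra_simps)
    hence "exc a b (Suc 0)" by (rule typeII[OF ab, rotated 3]) (use assms in auto)
    thus ?thesis by blast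
  next
    assume h: "A * a\<^sup>2 = C * b\<^sup>2"
    have "QE a b 0 (- int A) 0 (int C)" using h by (simp add: QE_def algebra_simps)
    hence "exc a b (Suc 0)" by (rule typeIII[OF ab, rotated 2]) (use assms in auto)
    thus ?thesis by blast
  qed
  then obtain n where "n > 0" "exc a b n" by blast
  then obtain n' where "n = Suc n'" "exc a b (Suc n')" using gr0_conv_Suc by auto
  hence "\<exists>A' B' C' :: nat. A' > 0 \<and> B' > 0 \<and> C' > 0 \<and>
           real A' * (anth_rem a b (n'+1))\<^sup>2
             = real B' * anth_rem a b (n'+1) * anth_rem a b (n'+2)
               + real C' * (anth_rem a b (n'+2))\<^sup>2"
    unfolding exc_def by (simp del: anth_rem.simps)
  thus ?thesis by blast
qed

end
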